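(* Let $0 < a < 1$. Then \[ (1-a)\left(\frac1{a} + \frac{\pi^2}{6} - 1\right) < \psi(1) - \psi(a) < (1-a)\left(\frac1{a} + 1\right). \]
   Context: $\psi=\Gamma'/\Gamma$ is the digamma function. *)

theory Defs
  imports "HOL-Analysis.Analysis"
begin

end

theory Submission
  imports Defs
begin

theorem lemma5p3:
  fixes a :: real
  assumes "0 < a" and "a < 1"
  shows "(1 - a) * (1 / a + pi ^ 2 / 6 - 1) < Digamma 1 - Digamma a
       \<and> Digamma 1 - Digamma a < (1 - a) * (1 / a + 1)"
proof -
  define g where "g k = 1 / (a + real k) - 1 / (real k + 1)" for k :: nat
  have a0: "a \<noteq> 0" using assms by simp
  have sg: "summable (\<lambda>k. inverse (real (Suc k)) - inverse (a + real k))"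
    using summable_Digamma[OF a0] by simp
  have "(\<lambda>k. inverse (real (Suc k)) - inverse (a + real k)) sums (Digamma a + euler_mascheroni)"
    using sg by (simp add: Digamma_def summable_sums)
  from sums_minus[OF this] have "g sums (Digamma 1 - Digamma a)"
    by (simp add: g_def[abs_def] inverse_eq_divide add_ac)
  hence G: "(\<lambda>k. g (Suc k)) sums (Digamma 1 - Digamma a - (1/a - 1))"
    using sums_Suc_iff[of g] by (simp add: g_def)
  define D where "D = Digamma 1 - Digamma a - (1/a - 1)"
  have L0: "(\<lambda>k. 1 / (real (Suc k) + 1)^2) sums (pi^2/6 - 1)"
    using inverse_squares_sums sums_Suc_iff[of "\<lambda>n. 1 / (real n + 1)^2" "pi^2/6 - 1"]
    by (simp add: add_ac)
  have L: "(\<lambda>k. (1 - a) * (1 / (real (Suc k) + 1)^2)) sums ((1 - a) * (pi^2/6 - 1))"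
    by (rule sums_mult[OF L0])
  have T0: "(\<lambda>k. 1 / real (Suc k) - 1 / real (Suc (Suc k))) sums (1 / real (Suc 0) - 0)"
    by (rule telescope_sums'[of "\<lambda>k. 1 / real (Suc k)"]) (use LIMSEQ_inverse_real_of_nat in \<open>simp add: inverse_eq_divide\<close>)
  have U: "(\<lambda>k. (1 - a) * (1 / real (Suc k) - 1 / real (Suc (Suc k)))) sums ((1 - a) * 1)"
    using sums_mult[OF T0, of "1 - a"] by simp
  have pos1: "(1 - a) * (1 / (real (Suc k) + 1)^2) < g (Suc k)" for k
  proof -
    have "g (Suc k) = (1 - a) / ((a + real k + 1) * (real k + 2))"
      using assms by (simp add: g_def field_simps)
    also have "(1 - a) / ((a + real k + 1) * (real k + 2)) > (1 - a) / ((real k + 2) * (real k + 2))"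
      using assms by (intro divide_strict_left_mono mult_strict_right_mono) auto
    finally show ?thesis by (simp add: power2_eq_square add_ac)
  qed
  have pos2: "g (Suc k) < (1 - a) * (1 / real (Suc k) - 1 / real (Suc (Suc k)))" for k
  proof -
    have "g (Suc k) = (1 - a) / ((a + real k + 1) * (real k + 2))"
      using assms by (simp add: g_def field_simps)
    also have "(1 - a) / ((a + real k + 1) * (real k + 2)) < (1 - a) / ((real k + 1) * (real k + 2))"
      using assms by (intro divide_strict_left_mono mult_strict_right_mono mult_pos_pos) auto
    also have "\<dots> = (1 - a) * (1 / real (Suc k) - 1 / real (Suc (Suc k)))"
      by (simp add: field_simps)
    finally show ?thesis .
  qed
  have "0 < (\<Sum>k. g (Suc k) - (1 - a) * (1 / (real (Suc k) + 1)^2))"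
    using pos1 sums_diff[OF G L] by (intro suminf_pos) (auto dest: sums_summable)
  hence l: "(1 - a) * (pi^2/6 - 1) < Digamma 1 - Digamma a - (1/a - 1)"
    using sums_unique[OF sums_diff[OF G L]] by simp
  have "0 < (\<Sum>k. (1 - a) * (1 / real (Suc k) - 1 / real (Suc (Suc k))) - g (Suc k))"
    using pos2 sums_diff[OF U G] by (intro suminf_pos) (auto dest: sums_summable)
  hence u: "Digamma 1 - Digamma a - (1/a - 1) < (1 - a) * 1"
    using sums_unique[OF sums_diff[OF U G]] by simp
  have e: "(1 - a) * (1 / a) = 1/a - 1" using a0 by (simp add: field_simps)
  show ?thesis using l u e by (simp add: algebra_simps)
qed

end
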